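(* Let $p>2$ be a prime and $d\geq 2$ an integer with $p-1=df$. Let $\omega$ be a fixed generator of $\mathbb{F}_p^*$, and for $i,j\in\mathbb{Z}/d\mathbb{Z}$ let $(i,j)=\#\{(u,v):0\leq u,v\leq f-1,\ 1+\omega^{du+i}\equiv\omega^{dv+j}\pmod p\}$ be the cyclotomic numbers of order $d$. Let $\theta=0$ if $f$ is even and $\theta=d/2$ if $f$ is odd. Let $a\in\mathbb{F}_p^*\setminus(\mathbb{F}_p^* )^d$ and $\alpha\equiv\mathrm{ind}_\omega(a)\pmod d$. Then $s_d(p,a)=2$ if $(\alpha+\theta,\theta)\neq0$, and otherwise \[ s_d(p,a)=\min\{s\mid \exists\,0\leq i_2,\dots,i_{s-1}\leq d-1:\ (\alpha+\theta,i_2)(i_2,i_3)\cdots(i_{s-1},\theta)\neq0\}. \]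
   Context: For $a\in\mathbb{F}_p^*$, $s_d(p,a)=\min\{k\mid a=\sum_{i=1}^k a_i^d,\ a_i\in\mathbb{F}_p^*\}$. $\mathrm{ind}_\omega(a)$ is the discrete logarithm of $a$ to base $\omega$. Indices of cyclotomic numbers are taken modulo $d$. *)

theory Defs
  imports "HOL-Number_Theory.Number_Theory"
begin

definition cyc :: "nat \<Rightarrow> nat \<Rightarrow> nat \<Rightarrow> int \<Rightarrow> int \<Rightarrow> nat" where
  "cyc p d w i j = card {(u, v). u < (p - 1) div d \<and> v < (p - 1) div d \<and>
      [1 + w ^ (d * u + nat (i mod int d)) = w ^ (d * v + nat (j mod int d))] (mod p)}"

definition waring_sd :: "nat \<Rightarrow> nat \<Rightarrow> nat \<Rightarrow> nat" where
  "waring_sd p d a = (LEAST k. \<exists>xs :: nat list. length xs = k \<and> (\<forall>x\<in>set xs. \<not> p dvd x) \<and>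
      [a = (\<Sum>x\<leftarrow>xs. x ^ d)] (mod p))"

definition cyc_chain_nonzero :: "nat \<Rightarrow> nat \<Rightarrow> nat \<Rightarrow> int list \<Rightarrow> bool" where
  "cyc_chain_nonzero p d w L = (\<forall>k. k + 1 < length L \<longrightarrow> cyc p d w (L ! k) (L ! (k + 1)) \<noteq> 0)"

end

theory Submission
  imports Defs
begin

locale cs =
  fixes p d w :: nat
  assumes prime: "prime p" and p2: "p > 2" and d1: "d \<ge> 1" and dd: "d dvd (p - 1)"
    and ordw: "ord p w = p - 1"
begin

definition inC :: "int \<Rightarrow> int \<Rightarrow> bool" where
  "inC i x \<longleftrightarrow> (\<exists>k::nat. [x = int w ^ k] (mod int p) \<and> [int k = i] (mod int d))"

lemma coprime_w: "coprime p w"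
  using ordw p2 ord_eq_0[of p w] by auto

lemma w_period: "[int w ^ (p - 1) = 1] (mod int p)"
proof -
  have "[w ^ (p - 1) = 1] (mod p)" using ord_works[of w p] ordw by simp
  then show ?thesis using cong_int_iff[of "w ^ (p - 1)" 1 p] by simp
qed

lemma w_period_mult: "[int w ^ ((p - 1) * m) = 1] (mod int p)"
  using cong_pow[OF w_period, of m] by (simp add: power_mult)

lemma w_pow_nodvd: "\<not> int p dvd int w ^ k"
proof
  assume "int p dvd int w ^ k"
  then have "p dvd w ^ k" by (metis of_nat_dvd_iff of_nat_power)
  then have "p dvd w" using prime prime_dvd_power by blast
  then show False using coprime_w prime
    by (metis coprime_absorb_left not_prime_unit)
qed

lemma gen: assumes "\<not> int p dvd x" shows "\<exists>k. [x = int w ^ k] (mod int p)"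
proof -
  define y where "y = nat (x mod int p)"
  have p0: "p > 1" using p2 by simp
  have ym: "int y = x mod int p" using p0 by (simp add: y_def)
  have "y \<noteq> 0" using assms ym by (auto simp: dvd_eq_mod_eq_0)
  moreover have "x mod int p < int p" using p0 by simp
  then have "y < p" using ym by linarith
  ultimately have "coprime y p"
  proof -
    have "\<not> p dvd y" using \<open>y \<noteq> 0\<close> \<open>y < p\<close> by (auto dest: dvd_imp_le)
    then show ?thesis using prime prime_imp_coprime coprime_commute by blast
  qed
  then have yt: "y \<in> totatives p" using \<open>y \<noteq> 0\<close> \<open>y < p\<close> by (simp add: totatives_def)
  have rp: "residue_primroot p w"
    using coprime_w ordw prime totient_prime p0 by (simp add: residue_primroot_def)
  have "y \<in> (\<lambda>i. w ^ i mod p) ` {..<totient p}"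
    using residue_primroot_is_generator[OF p0 rp] yt by (simp add: bij_betw_def)
  then obtain i where "y = w ^ i mod p" by blast
  then have "int y = int (w ^ i) mod int p" by (simp add: zmod_int)
  then have "int w ^ i mod int p = x mod int p" using ym by simp
  then have "[x = int w ^ i] (mod int p)" by (simp add: cong_def)
  then show ?thesis by blast
qed

lemma inC_nonzero: "inC i x \<Longrightarrow> \<not> int p dvd x"
  unfolding inC_def using w_pow_nodvd by (metis cong_dvd_iff)

lemma inC_exists: "\<not> int p dvd x \<Longrightarrow> \<exists>i. inC i x"
proof -
  assume "\<not> int p dvd x"
  then obtain k where "[x = int w ^ k] (mod int p)" using gen by blast
  then show ?thesis unfolding inC_def by (intro exI[of _ "int k"] exI[of _ k]) auto
qed

lemma inC_cong_x: "inC i x \<Longrightarrow> [x = y] (mod int p) \<Longrightarrow> inC i y"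
  unfolding inC_def by (meson cong_sym cong_trans)

lemma inC_cong_i: "inC i x \<Longrightarrow> [i = j] (mod int d) \<Longrightarrow> inC j x"
  unfolding inC_def by (meson cong_trans)

lemma inC_mult: "inC i x \<Longrightarrow> inC j y \<Longrightarrow> inC (i + j) (x * y)"
  unfolding inC_def
proof (elim exE conjE)
  fix k l assume "[x = int w ^ k] (mod int p)" "[int k = i] (mod int d)"
     "[y = int w ^ l] (mod int p)" "[int l = j] (mod int d)"
  then show "\<exists>m. [x * y = int w ^ m] (mod int p) \<and> [int m = i + j] (mod int d)"
    by (intro exI[of _ "k + l"]) (auto simp: power_add intro: cong_mult cong_add)
qed

lemma inC_one: "inC 0 1"
  unfolding inC_def by (intro exI[of _ 0]) auto

lemma inC_pow: "inC 0 y \<Longrightarrow> inC 0 (y ^ m)"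
proof (induction m)
  case 0 then show ?case by (simp add: inC_one)
next
  case (Suc m)
  then have "inC (0 + 0) (y * y ^ m)" by (intro inC_mult)
  then show ?case by simp
qed

lemma inC0_iff: "inC 0 y \<longleftrightarrow> (\<exists>z::nat. \<not> p dvd z \<and> [y = int z ^ d] (mod int p))"
proof
  assume "inC 0 y"
  then obtain k where k: "[y = int w ^ k] (mod int p)" "[int k = 0] (mod int d)"
    unfolding inC_def by blast
  then have "d dvd k" by (simp add: cong_0_iff)
  then obtain m where "k = d * m" by blast
  then have "[y = int (w ^ m) ^ d] (mod int p)" using k
    by (simp add: power_mult[symmetric] mult.commute)
  moreover have "\<not> p dvd w ^ m" using w_pow_nodvd[of m]
    by (metis of_nat_dvd_iff of_nat_power)
  ultimately show "\<exists>z::nat. \<not> p dvd z \<and> [y = int z ^ d] (mod int p)" by blast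
next
  assume "\<exists>z::nat. \<not> p dvd z \<and> [y = int z ^ d] (mod int p)"
  then obtain z where z: "\<not> p dvd z" "[y = int z ^ d] (mod int p)" by blast
  have "\<not> int p dvd int z" using z(1) by simp
  then obtain k where "[int z = int w ^ k] (mod int p)" using gen by blast
  then have "[int z ^ d = int w ^ (k * d)] (mod int p)"
    by (simp add: power_mult cong_pow)
  then have "[y = int w ^ (k * d)] (mod int p)" using z(2) by (meson cong_trans)
  then show "inC 0 y" unfolding inC_def
    by (intro exI[of _ "k * d"]) (auto simp: cong_0_iff)
qed


lemma minus_one: "inC (if even ((p - 1) div d) then 0 else int d div 2) (-1)"
proof -
  define h where "h = (p - 1) div 2"
  define f where "f = (p - 1) div d"
  have podd: "odd p" using prime p2 prime_odd_nat by blast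
  have h2: "p - 1 = 2 * h" using podd p2 unfolding h_def by presburger
  have df: "p - 1 = d * f" using dd unfolding f_def by simp
  have hpos: "0 < h" "h < p - 1" using h2 p2 by auto
  have w0: "w > 0" using coprime_w p2 by (cases "w = 0") auto
  have "[int w ^ h * int w ^ h = 1] (mod int p)"
    using w_period h2 by (simp add: power_add[symmetric] mult_2[symmetric])
  then have "[int w ^ h = 1] (mod int p) \<or> [int w ^ h = - 1] (mod int p)"
    using prime w0 by (intro cong_square) (auto simp: prime_nat_int_transfer)
  moreover have "\<not> [int w ^ h = 1] (mod int p)"
  proof
    assume "[int w ^ h = 1] (mod int p)"
    then have "[w ^ h = 1] (mod p)" using cong_int_iff[of "w ^ h" 1 p] by simp
    then show False using ord_works[of w p] ordw hpos by auto
  qed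
  ultimately have m1: "[- 1 = int w ^ h] (mod int p)" by (simp add: cong_sym)
  have "[int h = (if even f then 0 else int d div 2)] (mod int d)"
  proof (cases "even f")
    case True
    then obtain g where "f = 2 * g" by blast
    then have "h = d * g" using h2 df by simp
    then show ?thesis using True by (simp add: cong_0_iff)
  next
    case False
    have "d * f = 2 * h" using h2 df by simp
    then have "even (d * f)" by simp
    then have "even d" using False by simp
    then obtain e where e: "d = 2 * e" by blast
    obtain g where g: "f = 2 * g + 1" using False by (metis oddE)
    have "h = e + d * g" using h2 df e g by (simp add: algebra_simps)
    then have "int h = int e + int d * int g" by simp
    moreover have "int d div 2 = int e" using e by simp
    ultimately show ?thesis using False by (simp add: cong_def)
  qed
  then show ?thesis using m1 unfolding inC_def f_def by blast
qed

lemma reduce: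
  assumes "[int k = i] (mod int d)"
  shows "\<exists>u < (p - 1) div d. [int w ^ k = int w ^ (d * u + nat (i mod int d))] (mod int p)"
proof -
  define k1 where "k1 = k mod (p - 1)"
  define u where "u = k1 div d"
  have p1: "p - 1 > 0" using p2 by simp
  have "(p - 1) * (k div (p - 1)) + k1 = k" unfolding k1_def by simp
  then have "int w ^ k = int w ^ ((p - 1) * (k div (p - 1))) * int w ^ k1"
    by (simp add: power_add[symmetric])
  moreover have "[int w ^ ((p - 1) * (k div (p - 1))) * int w ^ k1 = 1 * int w ^ k1] (mod int p)"
    by (intro cong_mult w_period_mult cong_refl)
  ultimately have c1: "[int w ^ k = int w ^ k1] (mod int p)" by simp
  have "k1 mod d = k mod d" unfolding k1_def using dd by (simp add: mod_mod_cancel)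
  moreover have "int (k mod d) = i mod int d" using assms by (simp add: cong_def zmod_int)
  ultimately have "nat (i mod int d) = k1 mod d" by simp
  then have e: "d * u + nat (i mod int d) = k1" unfolding u_def by simp
  have "k1 < p - 1" unfolding k1_def using p1 by simp
  moreover have "p - 1 = (p - 1) div d * d" using dd by simp
  ultimately have "k1 < (p - 1) div d * d" by simp
  then have "u < (p - 1) div d" unfolding u_def by (rule less_mult_imp_div_less)
  then show ?thesis using c1 e by (intro exI[of _ u]) simp
qed

lemma cyc_iff: "cyc p d w i j \<noteq> 0 \<longleftrightarrow> (\<exists>x. inC i x \<and> inC j (1 + x))"
proof -
  define S where "S = {(u, v). u < (p - 1) div d \<and> v < (p - 1) div d \<and>
      [1 + w ^ (d * u + nat (i mod int d)) = w ^ (d * v + nat (j mod int d))] (mod p)}"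
  have fin: "finite S" unfolding S_def
    by (rule finite_subset[of _ "{..<(p - 1) div d} \<times> {..<(p - 1) div d}"]) auto
  have "cyc p d w i j = card S" unfolding cyc_def S_def by simp
  then have "cyc p d w i j \<noteq> 0 \<longleftrightarrow> S \<noteq> {}" using fin by simp
  also have "\<dots> \<longleftrightarrow> (\<exists>x. inC i x \<and> inC j (1 + x))"
  proof
    assume "S \<noteq> {}"
    then obtain u v where uv: "[1 + w ^ (d * u + nat (i mod int d)) = w ^ (d * v + nat (j mod int d))] (mod p)"
      unfolding S_def by auto
    define x where "x = int w ^ (d * u + nat (i mod int d))"
    have "inC i x" unfolding inC_def x_def
      using d1 by (intro exI[of _ "d * u + nat (i mod int d)"]) (auto simp: cong_def mod_add_left_eq[symmetric])
    moreover have "inC j (1 + x)" unfolding inC_def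
    proof (intro exI[of _ "d * v + nat (j mod int d)"] conjI)
      show "[1 + x = int w ^ (d * v + nat (j mod int d))] (mod int p)"
        using uv cong_int_iff[of "1 + w ^ (d * u + nat (i mod int d))" "w ^ (d * v + nat (j mod int d))" p]
        unfolding x_def by simp
      show "[int (d * v + nat (j mod int d)) = j] (mod int d)"
        using d1 by (auto simp: cong_def mod_add_left_eq[symmetric])
    qed
    ultimately show "\<exists>x. inC i x \<and> inC j (1 + x)" by blast
  next
    assume "\<exists>x. inC i x \<and> inC j (1 + x)"
    then obtain x k l where k: "[x = int w ^ k] (mod int p)" "[int k = i] (mod int d)"
      and l: "[1 + x = int w ^ l] (mod int p)" "[int l = j] (mod int d)"
      unfolding inC_def by blast
    obtain u where u: "u < (p - 1) div d" "[int w ^ k = int w ^ (d * u + nat (i mod int d))] (mod int p)"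
      using reduce[OF k(2)] by blast
    obtain v where v: "v < (p - 1) div d" "[int w ^ l = int w ^ (d * v + nat (j mod int d))] (mod int p)"
      using reduce[OF l(2)] by blast
    have "[1 + int w ^ (d * u + nat (i mod int d)) = int w ^ (d * v + nat (j mod int d))] (mod int p)"
    proof -
      have "[1 + int w ^ (d * u + nat (i mod int d)) = 1 + x] (mod int p)"
        using k(1) u(2) by (meson cong_add cong_refl cong_sym cong_trans)
      also have "[1 + x = int w ^ (d * v + nat (j mod int d))] (mod int p)"
        using l(1) v(2) by (meson cong_trans)
      finally show ?thesis .
    qed
    then have "[1 + w ^ (d * u + nat (i mod int d)) = w ^ (d * v + nat (j mod int d))] (mod p)"
      using cong_int_iff[of "1 + w ^ (d * u + nat (i mod int d))" "w ^ (d * v + nat (j mod int d))" p] by simp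
    then have "(u, v) \<in> S" unfolding S_def using u(1) v(1) by simp
    then show "S \<noteq> {}" by blast
  qed
  finally show ?thesis .
qed



lemma divC:
  assumes "inC i T" "inC i x"
  shows "\<exists>y. inC 0 y \<and> [T = x * y] (mod int p)"
proof -
  obtain k1 where k1: "[T = int w ^ k1] (mod int p)" "[int k1 = i] (mod int d)"
    using assms(1) unfolding inC_def by blast
  obtain k2 where k2: "[x = int w ^ k2] (mod int p)" "[int k2 = i] (mod int d)"
    using assms(2) unfolding inC_def by blast
  define k where "k = k1 + (p - 2) * k2"
  have pq: "p - 1 = Suc (p - 2)" using p2 by simp
  have e: "k2 + k = k1 + (p - 1) * k2" unfolding k_def pq by simp
  have "[x * int w ^ k = int w ^ k2 * int w ^ k] (mod int p)"
    using k2(1) by (intro cong_mult cong_refl)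
  also have "int w ^ k2 * int w ^ k = int w ^ k1 * int w ^ ((p - 1) * k2)"
    using e by (simp add: power_add[symmetric])
  also have "[\<dots> = int w ^ k1 * 1] (mod int p)"
    by (intro cong_mult cong_refl w_period_mult)
  finally have c0: "[x * int w ^ k = int w ^ k1] (mod int p)" by simp
  have c: "[T = x * int w ^ k] (mod int p)" using k1(1) c0 by (meson cong_sym cong_trans)
  have "[int k1 = int k2] (mod int d)" using k1(2) k2(2) by (meson cong_sym cong_trans)
  then have "int d dvd int k1 - int k2" by (simp only: cong_iff_dvd_diff)
  moreover have "int d dvd int (p - 1) * int k2" using dd by (simp add: of_nat_dvd_iff)
  ultimately have "int d dvd (int k1 - int k2) + int (p - 1) * int k2" by (rule dvd_add)
  moreover have "int k = (int k1 - int k2) + int (p - 1) * int k2"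
  proof -
    have "int (k2 + k) = int (k1 + (p - 1) * k2)" using e by simp
    then show ?thesis by simp
  qed
  ultimately have "int d dvd int k" by simp
  then have "inC 0 (int w ^ k)" unfolding inC_def
    by (intro exI[of _ k]) (auto simp: cong_0_iff)
  then show ?thesis using c by blast
qed

lemma stepB:
  assumes "inC i T" "inC j (T + y)" "inC 0 y"
  shows "cyc p d w i j \<noteq> 0"
proof -
  obtain k where k: "[y = int w ^ k] (mod int p)"
    using assms(3) unfolding inC_def by blast
  define y' where "y' = y ^ (p - 2)"
  have "[y ^ (p - 1) = (int w ^ k) ^ (p - 1)] (mod int p)" using k by (rule cong_pow)
  also have "(int w ^ k) ^ (p - 1) = int w ^ ((p - 1) * k)" by (simp add: power_mult[symmetric] mult.commute)
  also have "[\<dots> = 1] (mod int p)" by (rule w_period_mult)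
  finally have yy0: "[y ^ (p - 1) = 1] (mod int p)" .
  have pq: "p - 1 = Suc (p - 2)" using p2 by simp
  have yy: "[y * y' = 1] (mod int p)" using yy0 unfolding y'_def pq by simp
  have y'0: "inC 0 y'" unfolding y'_def using assms(3) by (rule inC_pow)
  define x where "x = T * y'"
  have "inC (i + 0) x" unfolding x_def using assms(1) y'0 by (rule inC_mult)
  then have xi: "inC i x" by simp
  have "inC (0 + j) (y' * (T + y))" using y'0 assms(2) by (rule inC_mult)
  moreover have "[y' * (T + y) = 1 + x] (mod int p)"
  proof -
    have "y' * (T + y) = x + y * y'" unfolding x_def by (simp add: algebra_simps)
    also have "[\<dots> = x + 1] (mod int p)" using yy by (intro cong_add cong_refl)
    finally show ?thesis by (simp add: add.commute)
  qed
  ultimately have "inC j (1 + x)" by (simp add: inC_cong_x)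
  then show ?thesis using xi cyc_iff by blast
qed

lemma chainA:
  "L \<noteq> [] \<Longrightarrow> cyc_chain_nonzero p d w L \<Longrightarrow> inC (hd L) T \<Longrightarrow>
   \<exists>zs::nat list. length zs = length L - 1 \<and> (\<forall>z\<in>set zs. \<not> p dvd z) \<and>
      inC (last L) (T + (\<Sum>z\<leftarrow>zs. int z ^ d))"
proof (induction L arbitrary: T)
  case Nil then show ?case by simp
next
  case (Cons i L')
  show ?case
  proof (cases L')
    case Nil
    then show ?thesis using Cons.prems by (intro exI[of _ "[]"]) simp
  next
    case (Cons j L'')
    have cij: "cyc p d w i j \<noteq> 0" using Cons.prems(2) \<open>L' = j # L''\<close>
      unfolding cyc_chain_nonzero_def by (auto dest: spec[of _ 0])
    have ch': "cyc_chain_nonzero p d w L'"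
      using Cons.prems(2) unfolding cyc_chain_nonzero_def
    proof (intro allI impI)
      fix k assume H: "\<forall>k. k + 1 < length (i # L') \<longrightarrow> cyc p d w ((i # L') ! k) ((i # L') ! (k + 1)) \<noteq> 0"
        and "k + 1 < length L'"
      have "k + 1 + 1 < length (i # L')" using \<open>k + 1 < length L'\<close> by simp
      then have "cyc p d w ((i # L') ! (k + 1)) ((i # L') ! (k + 1 + 1)) \<noteq> 0" using H by blast
      then show "cyc p d w (L' ! k) (L' ! (k + 1)) \<noteq> 0" by simp
    qed
    obtain x where x: "inC i x" "inC j (1 + x)" using cij cyc_iff by blast
    have Ti: "inC i T" using Cons.prems(3) by simp
    obtain y where y: "inC 0 y" "[T = x * y] (mod int p)" using divC[OF Ti x(1)] by blast
    obtain z where z: "\<not> p dvd z" "[y = int z ^ d] (mod int p)" using y(1) inC0_iff by blast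
    have "inC (0 + j) (y * (1 + x))" using y(1) x(2) by (rule inC_mult)
    moreover have "[y * (1 + x) = T + int z ^ d] (mod int p)"
    proof -
      have "y * (1 + x) = x * y + y" by (simp add: algebra_simps)
      also have "[\<dots> = T + int z ^ d] (mod int p)" using y(2) z(2) by (intro cong_add) (simp_all add: cong_sym)
      finally show ?thesis .
    qed
    ultimately have "inC j (T + int z ^ d)" by (simp add: inC_cong_x)
    then have "inC (hd L') (T + int z ^ d)" using \<open>L' = j # L''\<close> by simp
    from Cons.IH[OF _ ch' this] obtain zs where zs: "length zs = length L' - 1" "\<forall>z\<in>set zs. \<not> p dvd z"
      "inC (last L') (T + int z ^ d + (\<Sum>z\<leftarrow>zs. int z ^ d))" using \<open>L' = j # L''\<close> by blast
    show ?thesis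
      using zs z(1) \<open>L' = j # L''\<close> by (intro exI[of _ "z # zs"]) (simp add: add.assoc)
  qed
qed

end

lemma int_sum_list_pow: "int (\<Sum>x\<leftarrow>xs. x ^ d) = (\<Sum>x\<leftarrow>xs. int x ^ d)"
  by (induction xs) simp_all

lemma sum_list_nth: "(\<Sum>x\<leftarrow>xs. f x) = (\<Sum>j<length xs. f (xs ! j))"
  by (simp add: sum_list_sum_nth atLeast0LessThan)

lemma sum_list_take: "k \<le> length xs \<Longrightarrow> (\<Sum>x\<leftarrow>take k xs. f x) = (\<Sum>j<k. f (xs ! j))"
  by (simp add: sum_list_nth min_def)

theorem theorem1:
  fixes p d w a \<alpha> :: nat and \<theta> :: int
  assumes "prime p" and "p > 2" and "d \<ge> 2" and "d dvd (p - 1)"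
    and "ord p w = p - 1"
    and "\<theta> = (if even ((p - 1) div d) then 0 else int d div 2)"
    and "\<not> p dvd a" and "\<not> (\<exists>x. [x ^ d = a] (mod p))"
    and "\<alpha> < d" and "\<exists>k. [w ^ k = a] (mod p) \<and> [k = \<alpha>] (mod d)"
  shows "(cyc p d w (int \<alpha> + \<theta>) \<theta> \<noteq> 0 \<longrightarrow> waring_sd p d a = 2) \<and>
         (cyc p d w (int \<alpha> + \<theta>) \<theta> = 0 \<longrightarrow>
            waring_sd p d a = (LEAST s. \<exists>is :: int list. s \<ge> 2 \<and> length is = s - 2 \<and>
               (\<forall>i\<in>set is. 0 \<le> i \<and> i \<le> int d - 1) \<and>
               cyc_chain_nonzero p d w ([int \<alpha> + \<theta>] @ is @ [\<theta>])))"
proof -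
  interpret cs p d w using assms by unfold_locales auto
  have m1: "inC \<theta> (-1)" using minus_one assms(6) by simp
  obtain k0 where k0: "[w ^ k0 = a] (mod p)" "[k0 = \<alpha>] (mod d)" using assms(10) by blast
  have "inC (int \<alpha>) (int a)" unfolding inC_def
  proof (intro exI[of _ k0] conjI)
    have "[int (w ^ k0) = int a] (mod int p)" using k0(1) cong_int_iff by blast
    then have "[int w ^ k0 = int a] (mod int p)" by simp
    then show "[int a = int w ^ k0] (mod int p)" by (rule cong_sym)
    show "[int k0 = int \<alpha>] (mod int d)" using k0(2) cong_int_iff by blast
  qed
  from inC_mult[OF this m1] have ma: "inC (int \<alpha> + \<theta>) (- int a)" by simp
  have thth: "[\<theta> + \<theta> = 0] (mod int d)"
  proof (cases "even ((p - 1) div d)")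
    case True then show ?thesis using assms(6) by simp
  next
    case False
    have e: "d * ((p - 1) div d) = p - 1" using assms(4) by simp
    have "even (d * ((p - 1) div d))" unfolding e using prime_odd_nat[OF assms(1,2)] by simp
    then have "even d" using False by simp
    then have "\<theta> + \<theta> = int d" using False assms(6) by auto
    then show ?thesis by (simp add: cong_0_iff)
  qed
  have dpos: "d > 0" using assms(3) by simp

  define P where "P k \<longleftrightarrow> (\<exists>xs :: nat list. length xs = k \<and> (\<forall>x\<in>set xs. \<not> p dvd x) \<and>
      [a = (\<Sum>x\<leftarrow>xs. x ^ d)] (mod p))" for k
  define Q where "Q s \<longleftrightarrow> (\<exists>is :: int list. s \<ge> 2 \<and> length is = s - 2 \<and>
               (\<forall>i\<in>set is. 0 \<le> i \<and> i \<le> int d - 1) \<and>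
               cyc_chain_nonzero p d w ([int \<alpha> + \<theta>] @ is @ [\<theta>]))" for s
  have wn: "waring_sd p d a = Least P" unfolding waring_sd_def P_def by simp
  have Pcong: "P k \<longleftrightarrow> (\<exists>xs :: nat list. length xs = k \<and> (\<forall>x\<in>set xs. \<not> p dvd x) \<and>
      [int a = (\<Sum>x\<leftarrow>xs. int x ^ d)] (mod int p))" for k
    unfolding P_def by (simp only: cong_int_iff[symmetric] int_sum_list_pow)
  have "P a" unfolding P_def
  proof (intro exI[of _ "replicate a 1"] conjI)
    show "\<forall>x\<in>set (replicate a 1). \<not> p dvd x" using assms(1) by auto
  qed (simp_all add: sum_list_replicate)
  then have Pn: "P (Least P)" by (rule LeastI)
  define n where "n = Least P"

  have QP: "P s" if "Q s" for s
  proof -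
    obtain js where js: "s \<ge> 2" "length js = s - 2"
       "cyc_chain_nonzero p d w ([int \<alpha> + \<theta>] @ js @ [\<theta>])" using \<open>Q s\<close> unfolding Q_def by blast
    define L where "L = [int \<alpha> + \<theta>] @ js @ [\<theta>]"
    have "L \<noteq> []" "hd L = int \<alpha> + \<theta>" "last L = \<theta>" "length L = s" using js unfolding L_def by auto
    then obtain zs where zs: "length zs = s - 1" "\<forall>z\<in>set zs. \<not> p dvd z"
       "inC \<theta> (- int a + (\<Sum>z\<leftarrow>zs. int z ^ d))"
      using chainA[of L "- int a"] js(3) ma unfolding L_def by auto
    from inC_mult[OF zs(3) m1] have "inC (\<theta> + \<theta>) (int a - (\<Sum>z\<leftarrow>zs. int z ^ d))" by simp
    then have "inC 0 (int a - (\<Sum>z\<leftarrow>zs. int z ^ d))" using thth inC_cong_i by blast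
    then obtain z where z: "\<not> p dvd z" "[int a - (\<Sum>z\<leftarrow>zs. int z ^ d) = int z ^ d] (mod int p)"
      using inC0_iff by blast
    have "[int a = (\<Sum>x\<leftarrow>zs @ [z]. int x ^ d)] (mod int p)"
    proof -
      have "[int a - (\<Sum>z\<leftarrow>zs. int z ^ d) + (\<Sum>z\<leftarrow>zs. int z ^ d) = int z ^ d + (\<Sum>z\<leftarrow>zs. int z ^ d)] (mod int p)"
        using z(2) by (intro cong_add cong_refl)
      then show ?thesis by (simp add: add.commute)
    qed
    then show "P s" unfolding Pcong using zs z(1) js(1)
      by (intro exI[of _ "zs @ [z]"]) auto
  qed

  have Qn: "Q n"
  proof -
    obtain xs where xs: "length xs = n" "\<forall>x\<in>set xs. \<not> p dvd x"
        "[int a = (\<Sum>x\<leftarrow>xs. int x ^ d)] (mod int p)"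
      using Pn unfolding Pcong n_def by blast
    have minimal: "\<not> P k" if "k < n" for k using that unfolding n_def by (rule not_less_Least)
    have n0: "n \<noteq> 0"
    proof
      assume "n = 0"
      then have "[int a = 0] (mod int p)" using xs by simp
      then show False using assms(7) by (simp add: cong_0_iff)
    qed
    have n1: "n \<noteq> 1"
    proof
      assume "n = 1"
      then obtain x where "xs = [x]" using xs(1) by (cases xs) auto
      then have "[int a = int x ^ d] (mod int p)" using xs(3) by simp
      then have "[int x ^ d = int a] (mod int p)" by (rule cong_sym)
      then have "[x ^ d = a] (mod p)" using cong_int_iff[of "x ^ d" a p] by simp
      then have "\<exists>x. [x ^ d = a] (mod p)" by (rule exI)
      with assms(8) show False by (rule notE)
    qed
    then have n2: "n \<ge> 2" using n0 by arith
    define T where "T k = - int a + (\<Sum>j<k. int (xs ! j) ^ d)" for k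
    have Tnz: "\<not> int p dvd T k" if "k < n" for k
    proof
      assume "int p dvd T k"
      moreover have "int a - (\<Sum>j<k. int (xs ! j) ^ d) = - T k" unfolding T_def by simp
      ultimately have "int p dvd int a - (\<Sum>j<k. int (xs ! j) ^ d)" by simp
      then have "[int a = (\<Sum>j<k. int (xs ! j) ^ d)] (mod int p)"
        by (simp add: cong_iff_dvd_diff)
      then have "[int a = (\<Sum>x\<leftarrow>take k xs. int x ^ d)] (mod int p)"
        using sum_list_take[of k xs "\<lambda>x. int x ^ d"] that xs(1) by simp
      moreover have "\<forall>x\<in>set (take k xs). \<not> p dvd x" using xs(2) by (meson in_set_takeD)
      ultimately have "P k" unfolding Pcong using that xs(1) by (intro exI[of _ "take k xs"]) simp
      then show False using minimal that by blast
    qed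
    have Tsum: "T n = - int a + (\<Sum>x\<leftarrow>xs. int x ^ d)"
      unfolding T_def using sum_list_nth[of "\<lambda>x. int x ^ d" xs] xs(1) by simp
    have Tsuc: "T (Suc k) = T k + int (xs ! k) ^ d" for k unfolding T_def by simp
    have xsC: "inC 0 (int (xs ! k) ^ d)" if "k < n" for k
      unfolding inC0_iff using xs(1,2) that by (intro exI[of _ "xs ! k"]) auto
    define I where "I k = (if k = 0 then int \<alpha> + \<theta> else if k = n - 1 then \<theta>
        else (SOME i. inC i (T k)) mod int d)" for k
    have IC: "inC (I k) (T k)" if "k < n" for k
    proof (cases "k = 0")
      case True then show ?thesis using ma unfolding I_def T_def by simp
    next
      case False
      show ?thesis
      proof (cases "k = n - 1")
        case True
        have "[T (n - 1) + int (xs ! (n - 1)) ^ d = 0] (mod int p)"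
        proof -
          have e1: "T (n - 1) + int (xs ! (n - 1)) ^ d = T n" using Tsuc[of "n - 1"] n0 by simp
          have d1: "int p dvd int a - (\<Sum>x\<leftarrow>xs. int x ^ d)" using xs(3) by (simp add: cong_iff_dvd_diff)
          have e2: "T n = - (int a - (\<Sum>x\<leftarrow>xs. int x ^ d))" using Tsum by simp
          have "int p dvd T n" unfolding e2 using d1 by (simp only: dvd_minus_iff)
          then show ?thesis unfolding e1 by (simp add: cong_iff_dvd_diff)
        qed
        have c: "[int (xs ! (n - 1)) ^ d * -1 = T (n - 1)] (mod int p)"
        proof -
          have eq: "int (xs ! (n - 1)) ^ d * -1 - T (n - 1) = - (T (n - 1) + int (xs ! (n - 1)) ^ d)" by simp
          from \<open>[T (n - 1) + int (xs ! (n - 1)) ^ d = 0] (mod int p)\<close>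
          show ?thesis by (simp only: cong_iff_dvd_diff eq dvd_minus_iff diff_zero)
        qed
        have "inC (0 + \<theta>) (int (xs ! (n - 1)) ^ d * -1)" using xsC[of "n - 1"] n0 m1
          by (intro inC_mult) auto
        then have "inC \<theta> (T (n - 1))" using c inC_cong_x by simp
        then show ?thesis using True False unfolding I_def by simp
      next
        case False2: False
        have "\<exists>i. inC i (T k)" using inC_exists Tnz that by blast
        then have "inC (SOME i. inC i (T k)) (T k)" by (rule someI_ex)
        then have "inC ((SOME i. inC i (T k)) mod int d) (T k)"
          by (rule inC_cong_i) (simp add: cong_def)
        then show ?thesis using False False2 unfolding I_def by simp
      qed
    qed
    define L where "L = map I [0..<n]"
    have chain: "cyc_chain_nonzero p d w L" unfolding cyc_chain_nonzero_def
    proof (intro allI impI)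
      fix k assume "k + 1 < length L"
      then have k: "k + 1 < n" unfolding L_def by simp
      have "inC (I (k + 1)) (T k + int (xs ! k) ^ d)" using IC[of "k + 1"] k Tsuc[of k] by simp
      then have "cyc p d w (I k) (I (k + 1)) \<noteq> 0"
        using stepB[OF IC[of k] _ xsC[of k]] k by simp
      then show "cyc p d w (L ! k) (L ! (k + 1)) \<noteq> 0" unfolding L_def using k
        by (simp del: upt_Suc)
    qed
    have "[0..<n] = 0 # [1..<n - 1] @ [n - 1]"
    proof -
      have "[0..<n] = 0 # [Suc 0..<n]" using n0 by (simp add: upt_rec)
      also have "[Suc 0..<n] = [1..<n - 1] @ [n - 1]"
        using n2 upt_Suc_append[of 1 "n - 1"] by simp
      finally show ?thesis .
    qed
    then have LL: "L = [int \<alpha> + \<theta>] @ map I [1..<n - 1] @ [\<theta>]"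
      unfolding L_def I_def using n2 by simp
    have "\<forall>i\<in>set (map I [1..<n - 1]). 0 \<le> i \<and> i \<le> int d - 1"
      using dpos unfolding I_def by auto
    then show "Q n" unfolding Q_def using chain LL n2
      by (intro exI[of _ "map I [1..<n - 1]"]) auto
  qed

  have LQ: "(LEAST s. Q s) = n"
  proof (rule Least_equality)
    show "Q n" by (rule Qn)
    show "n \<le> s" if "Q s" for s using QP[OF that] unfolding n_def by (rule Least_le)
  qed
  have n2: "n \<ge> 2" using Qn unfolding Q_def by blast
  have part2: "waring_sd p d a = (LEAST s. Q s)" using wn LQ n_def by simp
  show ?thesis
  proof (intro conjI impI)
    assume c: "cyc p d w (int \<alpha> + \<theta>) \<theta> \<noteq> 0"
    have "Q 2" unfolding Q_def cyc_chain_nonzero_def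
      using c by (intro exI[of _ "[]"]) (auto simp: less_Suc_eq)
    then have "n \<le> 2" using Least_le[of Q 2] LQ by simp
    then show "waring_sd p d a = 2" using n2 wn n_def by simp
  next
    show "waring_sd p d a = (LEAST s. \<exists>is :: int list. s \<ge> 2 \<and> length is = s - 2 \<and>
               (\<forall>i\<in>set is. 0 \<le> i \<and> i \<le> int d - 1) \<and>
               cyc_chain_nonzero p d w ([int \<alpha> + \<theta>] @ is @ [\<theta>]))"
      using part2 unfolding Q_def by simp
  qed
qed

end
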